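(* Let $n,N\in\mathbb{N}$, $m\in\mathbb{R}$, $\rho\in(0,1]$, and let $a\in L^\infty S^m_\rho(n,N)$. Let $Z=(z_1,\dots,z_N)\in\mathbb{R}^{nN}$ with $z_j\in\mathbb{R}^n$ be such that the set $S:=\{j\in\{1,\dots,N\} : |z_j|\ge 1\}$ is nonempty. Then for every choice of numbers $N_j\ge 0$ ($j\in S$) there is a constant $C$, independent of $x$ and $Z$, such that \[ \Big|\int_{\mathbb{R}^{nN}} a(x,\Xi)\, e^{i\langle Z,\Xi\rangle}\, d\Xi\Big| \le C \prod_{j\in S}|z_j|^{-N_j}\quad\text{for all } x\in\mathbb{R}^n. \]
   Context: For $\Xi=(\xi_1,\dots,\xi_N)\in\mathbb{R}^{nN}$ with $\xi_j\in\mathbb{R}^n$, $|\Xi|^2=\sum_j|\xi_j|^2$, $\langle\Xi\rangle=(1+|\Xi|^2)^{1/2}$, and $\langle Z,\Xi\rangle=\sum_{j=1}^N z_j\cdot\xi_j$. A function $a:\mathbb{R}^n\times\mathbb{R}^{nN}\to\mathbb{C}$ belongs to $L^\infty S^m_\rho(n,N)$ if for every multi-index $\alpha\in\mathbb{Z}_+^{nN}$ there is $C_\alpha$ with $\operatorname{ess\,sup}_x|\partial_\Xi^\alpha a(x,\Xi)|\le C_\alpha\langle\Xi\rangle^{m-\rho|\alpha|}$ for all $\Xi$. The integral is understood as an oscillatory integral (e.g. as the sum of the integrals of $a\varphi_k$ over a smooth dyadic Littlewood–Paley partition of unity $\{\varphi_k\}_{k\ge0}$ of $\mathbb{R}^{nN}$).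 *)

theory Defs
  imports "HOL-Analysis.Analysis"
begin

definition pdiff :: "'a::euclidean_space \<Rightarrow> ('a \<Rightarrow> 'b::real_normed_vector) \<Rightarrow> 'a \<Rightarrow> 'b" where
  "pdiff e f p = vector_derivative (\<lambda>t::real. f (p + t *\<^sub>R e)) (at 0)"

text \<open>Iterated partial derivative; a list es of basis vectors encodes a multi-index
  (the multi-index alpha has alpha_e = number of occurrences of e, and length es = |alpha|).\<close>
fun iter_pdiff :: "'a::euclidean_space list \<Rightarrow> ('a \<Rightarrow> 'b::real_normed_vector) \<Rightarrow> 'a \<Rightarrow> 'b" where
  "iter_pdiff [] f = f"
| "iter_pdiff (e # es) f = pdiff e (iter_pdiff es f)"

definition smooth_fun :: "('a::euclidean_space \<Rightarrow> 'b::real_normed_vector) \<Rightarrow> bool" where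
  "smooth_fun f \<longleftrightarrow> (\<forall>es. set es \<subseteq> Basis \<longrightarrow> (\<forall>p. iter_pdiff es f differentiable (at p)))"

definition jbr :: "'a::real_normed_vector \<Rightarrow> real" where
  "jbr v = sqrt (1 + (norm v)\<^sup>2)"

text \<open>The symbol class L^infty S^m_rho(n,N): x ranges over R^n (type real^'n),
  Xi = (xi_1,...,xi_N) ranges over R^{nN} (type real^'n^'N, with xi_j = Xi $ j).
  a(x,.) is smooth in Xi, and for every multi-index the derivative bound holds
  with ess sup over x (w.r.t. Lebesgue measure).\<close>
definition LinfS :: "real \<Rightarrow> real \<Rightarrow> (real^'n \<Rightarrow> real^'n^'N \<Rightarrow> complex) \<Rightarrow> bool" where
  "LinfS m \<rho> a \<longleftrightarrow>
     (\<forall>x. smooth_fun (a x)) \<and>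
     (\<forall>es. set es \<subseteq> Basis \<longrightarrow>
        (\<exists>C. \<forall>\<Xi>. AE x in lborel. norm (iter_pdiff es (a x) \<Xi>) \<le> C * jbr \<Xi> powr (m - \<rho> * real (length es))))"

definition lp_partition :: "(nat \<Rightarrow> 'a::euclidean_space \<Rightarrow> real) \<Rightarrow> bool" where
  "lp_partition \<phi> \<longleftrightarrow> (\<exists>\<psi>::'a \<Rightarrow> real. smooth_fun \<psi> \<and>
      (\<forall>v. 0 \<le> \<psi> v \<and> \<psi> v \<le> 1) \<and>
      (\<forall>v. norm v \<le> 1 \<longrightarrow> \<psi> v = 1) \<and> (\<forall>v. norm v \<ge> 2 \<longrightarrow> \<psi> v = 0) \<and>
      \<phi> 0 = \<psi> \<and>
      (\<forall>k v. \<phi> (Suc k) v = \<psi> ((1 / 2 ^ Suc k) *\<^sub>R v) - \<psi> ((1 / 2 ^ k) *\<^sub>R v)))"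

text \<open>The oscillatory integral  int a(x,Xi) e^{i<Z,Xi>} dXi, as the sum of the integrals of
  a phi_k e^{i<Z,Xi>} over the partition. Here inner Z Xi = sum_j z_j . xi_j.\<close>
definition osc_int :: "(nat \<Rightarrow> 'a::euclidean_space \<Rightarrow> real) \<Rightarrow> ('a \<Rightarrow> complex) \<Rightarrow> 'a \<Rightarrow> complex" where
  "osc_int \<phi> f Z = (\<Sum>k. integral\<^sup>L lborel (\<lambda>\<Xi>. f \<Xi> * of_real (\<phi> k \<Xi>) * cis (inner Z \<Xi>)))"

end

theory Submission
  imports Defs
begin


fun fd :: "nat \<Rightarrow> 'a::real_vector \<Rightarrow> ('a \<Rightarrow> complex) \<Rightarrow> 'a \<Rightarrow> complex" where
  "fd 0 h f = f"
| "fd (Suc M) h f = (\<lambda>y. fd M h f y - fd M h f (y - h))"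

lemma fd_line:
  fixes e p :: "'a::real_vector"
  shows "fd M (t *\<^sub>R e) F (p + s *\<^sub>R e) = fd M t (\<lambda>s. F (p + s *\<^sub>R e)) s"
proof (induction M arbitrary: s)
  case 0 then show ?case by simp
next
  case (Suc M)
  have "p + s *\<^sub>R e - t *\<^sub>R e = p + (s - t) *\<^sub>R e" by (simp add: algebra_simps)
  show ?case by (simp only: fd.simps \<open>p + s *\<^sub>R e - t *\<^sub>R e = p + (s - t) *\<^sub>R e\<close> Suc.IH)
qed

lemma fd_deriv:
  assumes D: "\<And>i s. (D i has_vector_derivative D (Suc i) s) (at s)"
  shows "(fd M t (D i) has_vector_derivative fd M t (D (Suc i)) s) (at s)"
proof (induction M arbitrary: s)
  case 0 then show ?case using D by simp
next
  case (Suc M)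
  have sh: "((\<lambda>s. s - t) has_vector_derivative 1) (at s)" for s :: real
    by (auto intro!: derivative_eq_intros simp: has_real_derivative_iff_has_vector_derivative[symmetric])
  have "((fd M t (D i) \<circ> (\<lambda>s. s - t)) has_vector_derivative (1 *\<^sub>R fd M t (D (Suc i)) (s - t))) (at s)"
    by (rule vector_diff_chain_at[OF sh]) (use Suc in simp)
  then have "((\<lambda>s. fd M t (D i) (s - t)) has_vector_derivative fd M t (D (Suc i)) (s - t)) (at s)"
    by (simp add: o_def)
  then show ?case using Suc[of s] by (auto intro!: derivative_eq_intros)
qed

lemma fd_bound:
  assumes D: "\<And>i s. (D i has_vector_derivative D (Suc i) s) (at s)"
  shows "(\<forall>\<sigma>\<in>{0..real M}. norm (D (i + M) (x - \<sigma> * t)) \<le> B) \<Longrightarrow> norm (fd M t (D i) x) \<le> \<bar>t\<bar>^M * B"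
proof (induction M arbitrary: i x)
  case 0 then show ?case by (auto dest: bspec[of _ _ 0])
next
  case (Suc M)
  let ?G = "fd M t (D i)" and ?G' = "fd M t (D (Suc i))"
  have G'b: "norm (?G' (x - \<tau> * t)) \<le> \<bar>t\<bar>^M * B" if "\<tau> \<in> {0..1}" for \<tau>
  proof (rule Suc.IH)
    show "\<forall>\<sigma>\<in>{0..real M}. norm (D (Suc i + M) (x - \<tau> * t - \<sigma> * t)) \<le> B"
    proof
      fix \<sigma> assume "\<sigma> \<in> {0..real M}"
      then have "\<tau> + \<sigma> \<in> {0..real (Suc M)}" using that by auto
      then have "norm (D (i + Suc M) (x - (\<tau> + \<sigma>) * t)) \<le> B" using Suc.prems by blast
      moreover have "x - (\<tau> + \<sigma>) * t = x - \<tau> * t - \<sigma> * t" by (simp add: algebra_simps)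
      ultimately show "norm (D (Suc i + M) (x - \<tau> * t - \<sigma> * t)) \<le> B" by simp
    qed
  qed
  have seg: "y \<in> closed_segment (x - t) x \<Longrightarrow> \<exists>\<tau>\<in>{0..1}. y = x - \<tau> * t" for y
  proof -
    assume "y \<in> closed_segment (x - t) x"
    then obtain u where u: "0 \<le> u" "u \<le> 1" "y = (1 - u) *\<^sub>R (x - t) + u *\<^sub>R x"
      unfolding closed_segment_def by auto
    then show ?thesis by (intro bexI[of _ "1 - u"]) (auto simp: algebra_simps)
  qed
  have "norm (?G x - ?G (x - t)) \<le> (\<bar>t\<bar>^M * B) * norm (x - (x - t))"
  proof (rule differentiable_bound[of "closed_segment (x - t) x" ?G "\<lambda>y d. d *\<^sub>R ?G' y"])
    show "convex (closed_segment (x - t) x)" by simp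
    show "(?G has_derivative (\<lambda>d. d *\<^sub>R ?G' y)) (at y within closed_segment (x - t) x)" for y
      using fd_deriv[where D=D, OF D, of M t i y] unfolding has_vector_derivative_def
      by (rule has_derivative_at_withinI)
    show "onorm (\<lambda>d. d *\<^sub>R ?G' y) \<le> \<bar>t\<bar> ^ M * B" if ys: "y \<in> closed_segment (x - t) x" for y
    proof (rule onorm_le)
      fix d :: real
      obtain \<tau> where "\<tau> \<in> {0..1}" "y = x - \<tau> * t" using seg[OF ys] by blast
      then have "norm (?G' y) \<le> \<bar>t\<bar>^M * B" using G'b by blast
      then show "norm (d *\<^sub>R ?G' y) \<le> \<bar>t\<bar> ^ M * B * norm d"
        by (simp add: mult.commute mult_left_mono)
    qed
  qed auto
  then show ?case by (simp add: mult.commute mult.left_commute)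
qed



lemma leibniz_sum_identity:
  fixes A F :: "nat \<Rightarrow> complex"
  shows "(\<Sum>j\<le>i. of_nat (i choose j) * (A j * F (Suc (i - j)) + A (Suc j) * F (i - j)))
       = (\<Sum>j\<le>Suc i. of_nat (Suc i choose j) * A j * F (Suc i - j))"
proof -
  have R: "(\<Sum>j\<le>Suc i. of_nat (Suc i choose j) * A j * F (Suc i - j))
     = A 0 * F (Suc i) + (\<Sum>j\<le>i. of_nat (i choose j) * A (Suc j) * F (i - j))
        + (\<Sum>j\<le>i. of_nat (i choose Suc j) * A (Suc j) * F (i - j))"
    by (subst sum.atMost_Suc_shift) (simp add: distrib_right sum.distrib del: sum.atMost_Suc)
  have L2: "A 0 * F (Suc i) + (\<Sum>j\<le>i. of_nat (i choose Suc j) * A (Suc j) * F (i - j))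
      = (\<Sum>j\<le>Suc i. of_nat (i choose j) * A j * F (Suc i - j))"
    by (subst sum.atMost_Suc_shift) (simp del: sum.atMost_Suc)
  also have "\<dots> = (\<Sum>j\<le>i. of_nat (i choose j) * A j * F (Suc (i - j)))"
    by (simp add: Suc_diff_le)
  finally have L2': "A 0 * F (Suc i) + (\<Sum>j\<le>i. of_nat (i choose Suc j) * A (Suc j) * F (i - j))
      = (\<Sum>j\<le>i. of_nat (i choose j) * A j * F (Suc (i - j)))" .
  have "(\<Sum>j\<le>i. of_nat (i choose j) * (A j * F (Suc (i - j)) + A (Suc j) * F (i - j)))
     = (\<Sum>j\<le>i. of_nat (i choose j) * A j * F (Suc (i - j))) + (\<Sum>j\<le>i. of_nat (i choose j) * A (Suc j) * F (i - j))"
    by (simp add: distrib_left sum.distrib mult.assoc)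
  then show ?thesis unfolding R L2'[symmetric] by (simp add: algebra_simps)
qed

lemma leibniz_family:
  fixes A F :: "nat \<Rightarrow> real \<Rightarrow> complex"
  assumes A: "\<And>i s. (A i has_vector_derivative A (Suc i) s) (at s)"
    and F: "\<And>i s. (F i has_vector_derivative F (Suc i) s) (at s)"
  shows "((\<lambda>s. \<Sum>j\<le>i. of_nat (i choose j) * A j s * F (i - j) s) has_vector_derivative
          (\<Sum>j\<le>Suc i. of_nat (Suc i choose j) * A j s * F (Suc i - j) s)) (at s)"
proof -
  have "((\<lambda>s. \<Sum>j\<le>i. of_nat (i choose j) * A j s * F (i - j) s) has_vector_derivative
      (\<Sum>j\<le>i. of_nat (i choose j) * (A j s * F (Suc (i - j)) s + A (Suc j) s * F (i - j) s))) (at s)"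
  proof (rule has_vector_derivative_sum)
    fix j assume "j \<in> {..i}"
    have "((\<lambda>s. A j s * F (i - j) s) has_vector_derivative
        (A j s * F (Suc (i - j)) s + A (Suc j) s * F (i - j) s)) (at s)"
      using has_vector_derivative_mult[OF A F] by simp
    then have "((\<lambda>s. of_nat (i choose j) * (A j s * F (i - j) s)) has_vector_derivative
        of_nat (i choose j) * (A j s * F (Suc (i - j)) s + A (Suc j) s * F (i - j) s)) (at s)"
      by (rule has_vector_derivative_mult_right)
    then show "((\<lambda>s. of_nat (i choose j) * A j s * F (i - j) s) has_vector_derivative
        of_nat (i choose j) * (A j s * F (Suc (i - j)) s + A (Suc j) s * F (i - j) s)) (at s)"
      by (simp add: mult.assoc)
  qed
  then show ?thesis
    using leibniz_sum_identity[of i "\<lambda>j. A j s" "\<lambda>j. F j s"] by simp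
qed



lemma line_vd:
  fixes g :: "'a::real_normed_vector \<Rightarrow> 'b::real_normed_vector"
  assumes "(g has_derivative g') (at (p + s *\<^sub>R e))"
  shows "((\<lambda>s. g (p + s *\<^sub>R e)) has_vector_derivative g' e) (at s)"
proof -
  have lin: "linear g'" using assms has_derivative_linear by blast
  have i: "((\<lambda>s. p + s *\<^sub>R e) has_derivative (\<lambda>d. d *\<^sub>R e)) (at s)"
    by (auto intro!: derivative_eq_intros)
  have "((\<lambda>s. g (p + s *\<^sub>R e)) has_derivative (\<lambda>d. g' (d *\<^sub>R e))) (at s)"
    using has_derivative_compose[OF i assms] by (simp add: o_def)
  moreover have "(\<lambda>d. g' (d *\<^sub>R e)) = (\<lambda>d. d *\<^sub>R g' e)"
    using lin by (simp add: linear_scale)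
  ultimately show ?thesis unfolding has_vector_derivative_def by simp
qed

lemma pdiff_eq:
  fixes g :: "'a::euclidean_space \<Rightarrow> 'b::real_normed_vector"
  assumes "(g has_derivative g') (at q)"
  shows "pdiff e g q = g' e"
proof -
  have "((\<lambda>t. g (q + t *\<^sub>R e)) has_vector_derivative g' e) (at 0)"
    by (rule line_vd) (use assms in simp)
  then show ?thesis unfolding pdiff_def by (rule vector_derivative_at)
qed

lemma line_pdiff:
  fixes g :: "'a::euclidean_space \<Rightarrow> 'b::real_normed_vector"
  assumes "\<And>q. g differentiable (at q)"
  shows "((\<lambda>s. g (p + s *\<^sub>R e)) has_vector_derivative pdiff e g (p + s *\<^sub>R e)) (at s)"
proof -
  obtain g' where g': "(g has_derivative g') (at (p + s *\<^sub>R e))"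
    using assms unfolding differentiable_def by blast
  show ?thesis using line_vd[OF g'] pdiff_eq[OF g'] by simp
qed

lemma line_pdiff_scaled:
  fixes g :: "'a::euclidean_space \<Rightarrow> 'b::real_normed_vector"
  assumes "\<And>q. g differentiable (at q)"
  shows "((\<lambda>s. g (c *\<^sub>R (p + s *\<^sub>R e))) has_vector_derivative c *\<^sub>R pdiff e g (c *\<^sub>R (p + s *\<^sub>R e))) (at s)"
proof -
  have eq: "c *\<^sub>R (p + s *\<^sub>R e) = c *\<^sub>R p + s *\<^sub>R (c *\<^sub>R e)" for s
    by (simp add: algebra_simps)
  obtain g' where g': "(g has_derivative g') (at (c *\<^sub>R p + s *\<^sub>R (c *\<^sub>R e)))"
    using assms unfolding differentiable_def by blast
  have "linear g'" using g' has_derivative_linear by blast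
  then have "g' (c *\<^sub>R e) = c *\<^sub>R g' e" by (simp add: linear_scale)
  then show ?thesis unfolding eq using line_vd[OF g'] pdiff_eq[OF g', of e] by simp
qed

lemma smooth_rep_diff:
  assumes "smooth_fun f" "e \<in> Basis"
  shows "iter_pdiff (replicate j e) f differentiable (at q)"
proof -
  have "set (replicate j e) \<subseteq> Basis" using assms(2) by auto
  then show ?thesis using assms(1) unfolding smooth_fun_def by blast
qed

lemma smooth_rep_cont:
  assumes "smooth_fun f" "e \<in> Basis"
  shows "continuous_on UNIV (iter_pdiff (replicate j e) f)"
  using smooth_rep_diff[OF assms] differentiable_imp_continuous_within
  by (metis continuous_at_imp_continuous_on)

lemma smooth_rep_chain:
  assumes "smooth_fun f" "e \<in> Basis"
  shows "((\<lambda>s. iter_pdiff (replicate j e) f (p + s *\<^sub>R e)) has_vector_derivative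
          iter_pdiff (replicate (Suc j) e) f (p + s *\<^sub>R e)) (at s)"
  using line_pdiff[OF smooth_rep_diff[OF assms]] by simp

lemma smooth_rep_chain_scaled:
  assumes "smooth_fun f" "e \<in> Basis"
  shows "((\<lambda>s. iter_pdiff (replicate j e) f (c *\<^sub>R (p + s *\<^sub>R e))) has_vector_derivative
          c *\<^sub>R iter_pdiff (replicate (Suc j) e) f (c *\<^sub>R (p + s *\<^sub>R e))) (at s)"
  using line_pdiff_scaled[OF smooth_rep_diff[OF assms]] by simp

lemma pdiff_locally_const:
  fixes f :: "'a::euclidean_space \<Rightarrow> 'b::real_normed_vector"
  assumes "open U" "v \<in> U" "\<And>w. w \<in> U \<Longrightarrow> f w = c"
  shows "pdiff e f v = 0"
proof -
  let ?T = "{t::real. v + t *\<^sub>R e \<in> U}"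
  have "open ?T"
    by (rule open_vimage[OF assms(1), of "\<lambda>t. v + t *\<^sub>R e", simplified vimage_def])
       (auto intro!: continuous_intros)
  have "((\<lambda>t. c) has_vector_derivative 0) (at (0::real))" by simp
  then have "((\<lambda>t. f (v + t *\<^sub>R e)) has_vector_derivative 0) (at 0)"
    by (rule has_vector_derivative_transform_within_open[OF _ \<open>open ?T\<close>]) (use assms in auto)
  then show ?thesis unfolding pdiff_def by (rule vector_derivative_at)
qed

lemma rep_vanish:
  fixes f :: "'a::euclidean_space \<Rightarrow> 'b::real_normed_vector"
  assumes "open U" "\<And>w. w \<in> U \<Longrightarrow> f w = c"
  shows "v \<in> U \<Longrightarrow> iter_pdiff (replicate (Suc j) e) f v = 0"
proof (induction j arbitrary: v)
  case 0 then show ?case using pdiff_locally_const[OF assms(1) 0 assms(2)] by simp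
next
  case (Suc j)
  then show ?case using pdiff_locally_const[OF assms(1) Suc.prems, of "iter_pdiff (replicate (Suc j) e) f" 0]
    Suc.IH by simp
qed



lemma jbr_ge_norm: "norm v \<le> jbr v"
  unfolding jbr_def by (rule real_le_rsqrt) simp

lemma jbr_ge_1: "1 \<le> jbr v"
  unfolding jbr_def by simp

lemma jbr_pos: "0 < jbr v"
  using jbr_ge_1[of v] by simp

lemma jbr_le: "jbr v \<le> 1 + norm v"
  unfolding jbr_def by (rule real_sqrt_le_iff[THEN iffD2, of _ "(1 + norm v)^2", simplified])
    (simp add: power2_eq_square algebra_simps)

locale psi_loc =
  fixes \<psi> :: "'a::euclidean_space \<Rightarrow> real" and e :: 'a
  assumes sm: "smooth_fun \<psi>" and e: "e \<in> Basis"
    and r01: "\<And>v. 0 \<le> \<psi> v \<and> \<psi> v \<le> 1"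
    and one: "\<And>v. norm v \<le> 1 \<Longrightarrow> \<psi> v = 1"
    and zero: "\<And>v. norm v \<ge> 2 \<Longrightarrow> \<psi> v = 0"
begin

abbreviation "Psi j \<equiv> iter_pdiff (replicate j e) \<psi>"

lemma Psi_out: "Psi j v \<noteq> 0 \<Longrightarrow> norm v \<le> 2"
proof (cases j)
  case 0 then show "Psi j v \<noteq> 0 \<Longrightarrow> norm v \<le> 2" using zero[of v] by (cases "norm v \<le> 2") auto
next
  case (Suc j')
  have "open {v::'a. 2 < norm v}" by (rule open_Collect_less) (auto intro!: continuous_intros)
  then have "v \<in> {v. 2 < norm v} \<Longrightarrow> Psi (Suc j') v = 0"
    by (rule rep_vanish[of _ _ 0]) (use zero in auto)
  then show "Psi j v \<noteq> 0 \<Longrightarrow> norm v \<le> 2" using Suc by (cases "norm v \<le> 2") auto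
qed

lemma Psi_in: "Psi (Suc j) v \<noteq> 0 \<Longrightarrow> 1 \<le> norm v"
proof -
  have "open {v::'a. norm v < 1}" by (rule open_Collect_less) (auto intro!: continuous_intros)
  then have "v \<in> {v. norm v < 1} \<Longrightarrow> Psi (Suc j) v = 0"
    by (rule rep_vanish[of _ _ 1]) (use one in auto)
  then show "Psi (Suc j) v \<noteq> 0 \<Longrightarrow> 1 \<le> norm v" by (cases "1 \<le> norm v") auto
qed

lemma Psi_bounded: "\<exists>K\<ge>0. \<forall>v. \<bar>Psi j v\<bar> \<le> K"
proof -
  have "compact (Psi j ` cball 0 2)"
    by (rule compact_continuous_image[OF continuous_on_subset[OF smooth_rep_cont[OF sm e, of j]]]) auto
  then obtain K where K: "\<And>y. y \<in> Psi j ` cball 0 2 \<Longrightarrow> norm y \<le> K"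
    using compact_imp_bounded[of "Psi j ` cball 0 2"] unfolding bounded_iff by blast
  have "\<bar>Psi j v\<bar> \<le> max K 0" for v
  proof (cases "norm v \<le> 2")
    case True then have "norm (Psi j v) \<le> K" using K[of "Psi j v"] by auto
    then show ?thesis by simp
  next
    case False then have "Psi j v = 0" using Psi_out[of j v] by auto
    then show ?thesis by simp
  qed
  then show ?thesis by (intro exI[of _ "max K 0"]) auto
qed

end



context psi_loc begin

lemma phi_family:
  fixes \<phi> :: "nat \<Rightarrow> 'a \<Rightarrow> real"
  assumes \<phi>0: "\<phi> 0 = \<psi>" and \<phi>S: "\<And>k v. \<phi> (Suc k) v = \<psi> ((1 / 2 ^ Suc k) *\<^sub>R v) - \<psi> ((1 / 2 ^ k) *\<^sub>R v)"
    and K: "\<And>j v. \<bar>Psi j v\<bar> \<le> K j"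
  shows "\<exists>\<Phi>. (\<forall>s. \<Phi> 0 s = complex_of_real (\<phi> n (p + s *\<^sub>R e)))
     \<and> (\<forall>i s. (\<Phi> i has_vector_derivative \<Phi> (Suc i) s) (at s))
     \<and> (\<forall>j s. norm (\<Phi> j s) \<le> 2 * 2^j * K j * (1 / 2^n)^j)
     \<and> (\<forall>j s. \<Phi> j s \<noteq> 0 \<longrightarrow> 2^n \<le> 2 * jbr (p + s *\<^sub>R e) \<and> norm (p + s *\<^sub>R e) \<le> 2^(Suc n))"
proof -
  have K0: "0 \<le> K j" for j using K[of j 0] by linarith
  have ofr: "((\<lambda>s. complex_of_real (g s)) has_vector_derivative complex_of_real g') (at s)"
    if "(g has_vector_derivative g') (at s)" for g :: "real \<Rightarrow> real" and g' s
    using bounded_linear.has_vector_derivative[OF bounded_linear_of_real that] .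
  show ?thesis
  proof (cases n)
    case 0
    define \<Phi> where "\<Phi> j s = complex_of_real (Psi j (p + s *\<^sub>R e))" for j s
    show ?thesis
    proof (intro exI[of _ \<Phi>] conjI allI impI)
      show "\<Phi> 0 s = complex_of_real (\<phi> n (p + s *\<^sub>R e))" for s
        using 0 \<phi>0 by (simp add: \<Phi>_def)
      show "(\<Phi> i has_vector_derivative \<Phi> (Suc i) s) (at s)" for i s
        unfolding \<Phi>_def by (rule ofr) (rule smooth_rep_chain[OF sm e])
      show "norm (\<Phi> j s) \<le> 2 * 2^j * K j * (1 / 2^n)^j" for j s
      proof -
        have "norm (\<Phi> j s) \<le> K j" using K[of j] by (simp add: \<Phi>_def)
        also have "\<dots> \<le> 2 * 2^j * K j" using K0[of j]
        proof -
          have "(1::real) \<le> 2 * 2^j" using one_le_power[of "2::real" j] by linarith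
          from mult_right_mono[OF this K0[of j]] show ?thesis by simp
        qed
        finally show ?thesis using 0 by simp
      qed
      show "2^n \<le> 2 * jbr (p + s *\<^sub>R e)" if "\<Phi> j s \<noteq> 0" for j s
        using 0 jbr_ge_1[of "p + s *\<^sub>R e"] by simp
      show "norm (p + s *\<^sub>R e) \<le> 2^(Suc n)" if "\<Phi> j s \<noteq> 0" for j s
        using that Psi_out 0 by (auto simp: \<Phi>_def)
    qed
  next
    case (Suc k)
    define c1 :: real where "c1 = 1 / 2 ^ Suc k"
    define c2 :: real where "c2 = 1 / 2 ^ k"
    have c1p: "c1 > 0" and c2p: "c2 > 0" and c12: "c2 = 2 * c1" and c2le: "c2 \<le> 1" by (auto simp: c1_def c2_def)
    define \<Phi> where "\<Phi> j s = complex_of_real (c1^j * Psi j (c1 *\<^sub>R (p + s *\<^sub>R e)) - c2^j * Psi j (c2 *\<^sub>R (p + s *\<^sub>R e)))" for j s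
    have nzf: "2^n \<le> 2 * jbr (p + s *\<^sub>R e) \<and> norm (p + s *\<^sub>R e) \<le> 2^(Suc n)" if nz: "\<Phi> j s \<noteq> 0" for j s
    proof -
      let ?q = "p + s *\<^sub>R e"
      have nc1: "norm (c1 *\<^sub>R ?q) = c1 * norm ?q" and nc2: "norm (c2 *\<^sub>R ?q) = c2 * norm ?q"
        using c1p c2p by auto
      have "2^k \<le> norm ?q \<and> norm ?q \<le> 2^(k+2)"
      proof (cases j)
        case 0
        then have ne: "\<psi> (c1 *\<^sub>R ?q) \<noteq> \<psi> (c2 *\<^sub>R ?q)" using nz by (auto simp: \<Phi>_def)
        show ?thesis
        proof (rule ccontr)
          assume "\<not> ?thesis"
          have pk: "(0::real) < 2^k" by simp
          from \<open>\<not> ?thesis\<close> consider "norm ?q < 2^k" | "norm ?q > 2^(k+2)" by linarith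
          then show False
          proof cases
            case 1
            then have "norm (c1 *\<^sub>R ?q) \<le> 1" "norm (c2 *\<^sub>R ?q) \<le> 1"
            proof -
              have a: "norm ?q \<le> 2^k" using 1 by simp
              have b: "norm ?q \<le> 2 * 2^k" using a pk by linarith
              show "norm (c1 *\<^sub>R ?q) \<le> 1" "norm (c2 *\<^sub>R ?q) \<le> 1"
                unfolding nc1 nc2 using a b by (simp_all add: c1_def c2_def field_simps)
            qed
            then show False using ne one by simp
          next
            case 2
            then have "norm (c1 *\<^sub>R ?q) \<ge> 2" "norm (c2 *\<^sub>R ?q) \<ge> 2"
            proof -
              have a: "norm ?q \<ge> 4 * 2^k" using 2 by simp
              have b: "norm ?q \<ge> 2 * 2^k" using a pk by linarith
              show "norm (c1 *\<^sub>R ?q) \<ge> 2" "norm (c2 *\<^sub>R ?q) \<ge> 2"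
                unfolding nc1 nc2 using a b by (simp_all add: c1_def c2_def field_simps)
            qed
            then show False using ne zero by simp
          qed
        qed
      next
        case (Suc j')
        then have "Psi (Suc j') (c1 *\<^sub>R ?q) \<noteq> 0 \<or> Psi (Suc j') (c2 *\<^sub>R ?q) \<noteq> 0"
          using nz by (auto simp: \<Phi>_def)
        then show ?thesis
        proof
          assume "Psi (Suc j') (c1 *\<^sub>R ?q) \<noteq> 0"
          then have "1 \<le> c1 * norm ?q" "c1 * norm ?q \<le> 2" using Psi_in[of j' "c1 *\<^sub>R ?q"] Psi_out[of "Suc j'" "c1 *\<^sub>R ?q"] nc1 by auto
          then show ?thesis by (auto simp: c1_def field_simps)
        next
          assume "Psi (Suc j') (c2 *\<^sub>R ?q) \<noteq> 0"
          then have "1 \<le> c2 * norm ?q" "c2 * norm ?q \<le> 2" using Psi_in[of j' "c2 *\<^sub>R ?q"] Psi_out[of "Suc j'" "c2 *\<^sub>R ?q"] nc2 by auto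
          then show ?thesis by (auto simp: c2_def field_simps)
        qed
      qed
      then show ?thesis using jbr_ge_norm[of ?q] Suc by auto
    qed
    show ?thesis
    proof (intro exI[of _ \<Phi>] conjI allI impI)
      show "\<Phi> 0 s = complex_of_real (\<phi> n (p + s *\<^sub>R e))" for s
        using Suc \<phi>S by (simp add: \<Phi>_def c1_def c2_def)
      show "(\<Phi> i has_vector_derivative \<Phi> (Suc i) s) (at s)" for i s
      proof -
        have d: "((\<lambda>s. c^i * Psi i (c *\<^sub>R (p + s *\<^sub>R e))) has_vector_derivative c^(Suc i) * Psi (Suc i) (c *\<^sub>R (p + s *\<^sub>R e))) (at s)" for c
          using has_vector_derivative_mult_right[OF smooth_rep_chain_scaled[OF sm e, of i c p s], of "c^i"]
          by (simp add: mult.assoc mult.commute mult.left_commute)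
        show ?thesis unfolding \<Phi>_def by (rule ofr) (rule has_vector_derivative_diff[OF d d])
      qed
      show "norm (\<Phi> j s) \<le> 2 * 2^j * K j * (1 / 2^n)^j" for j s
      proof -
        let ?q = "p + s *\<^sub>R e"
        have "norm (\<Phi> j s) \<le> \<bar>c1^j * Psi j (c1 *\<^sub>R ?q)\<bar> + \<bar>c2^j * Psi j (c2 *\<^sub>R ?q)\<bar>"
          unfolding \<Phi>_def norm_of_real by (rule abs_triangle_ineq4)
        also have "\<dots> \<le> c1^j * K j + c2^j * K j"
          using K[of j] c1p c2p by (intro add_mono) (auto simp: abs_mult intro: mult_left_mono)
        also have "\<dots> \<le> c2^j * K j + c2^j * K j"
          using c1p c12 K0[of j] by (intro add_mono mult_right_mono power_mono) auto
        also have "\<dots> = 2 * 2^j * K j * (1 / 2^n)^j"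
        proof -
          have "c2^j = 2^j * (1/2^n)^j" unfolding c12 Suc c1_def by (simp only: power_mult_distrib)
          then show ?thesis by simp
        qed
        finally show ?thesis .
      qed
    qed (use nzf in blast)+
  qed
qed

end



lemma translate_int:
  fixes H :: "'a::euclidean_space \<Rightarrow> complex"
  assumes "integrable lborel H"
  shows "integrable lborel (\<lambda>x. H (x - h))" "integral\<^sup>L lborel (\<lambda>x. H (x - h)) = integral\<^sup>L lborel H"
proof -
  have [measurable]: "H \<in> borel_measurable lborel" using assms by measurable
  then have Hb: "H \<in> borel_measurable borel" by simp
  have m: "(+) (- h) \<in> measurable lborel borel" by (simp add: continuous_on_add borel_measurable_continuous_onI continuous_on_const continuous_on_id)
  have eq: "(\<lambda>x. H (- h + x)) = (\<lambda>x. H (x - h))" by (simp add: algebra_simps)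
  have "integrable (distr lborel borel ((+) (- h))) H" using assms lborel_distr_plus[of "-h"] by simp
  then show "integrable lborel (\<lambda>x. H (x - h))"
    using integrable_distr_eq[OF m Hb] eq by simp
  have "integral\<^sup>L (distr lborel borel ((+) (- h))) H = integral\<^sup>L lborel (\<lambda>x. H (- h + x))"
    by (rule integral_distr[OF m Hb])
  then show "integral\<^sup>L lborel (\<lambda>x. H (x - h)) = integral\<^sup>L lborel H"
    using lborel_distr_plus[of "-h"] eq by simp
qed

lemma fd_integral:
  fixes g :: "'a::euclidean_space \<Rightarrow> complex"
  assumes int: "integrable lborel (\<lambda>x. g x * cis (inner Z x))" and hpi: "inner Z h = pi"
  shows "integrable lborel (\<lambda>x. fd M h g x * cis (inner Z x)) \<and>
         integral\<^sup>L lborel (\<lambda>x. fd M h g x * cis (inner Z x)) = 2^M * integral\<^sup>L lborel (\<lambda>x. g x * cis (inner Z x))"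
proof (induction M)
  case 0 then show ?case using int by simp
next
  case (Suc M)
  let ?H = "\<lambda>x. fd M h g x * cis (inner Z x)"
  have IH1: "integrable lborel ?H" using Suc by blast
  have cs: "cis (inner Z x) = - cis (inner Z (x - h))" for x
  proof -
    have "cis (inner Z x - pi) = cis (inner Z x) / cis pi" by (rule cis_divide[symmetric])
    then have "cis (inner Z (x - h)) = cis (inner Z x) / cis pi"
      by (simp add: inner_diff_right hpi)
    then show ?thesis by simp
  qed
  have sh: "(\<lambda>x. fd M h g (x - h) * cis (inner Z x)) = (\<lambda>x. - ?H (x - h))"
  proof (rule ext)
    fix x
    have "fd M h g (x - h) * cis (inner Z x) = fd M h g (x - h) * (- cis (inner Z (x - h)))"
      by (subst cs[of x]) (rule refl)
    then show "fd M h g (x - h) * cis (inner Z x) = - ?H (x - h)" by simp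
  qed
  have i2: "integrable lborel (\<lambda>x. fd M h g (x - h) * cis (inner Z x))"
    unfolding sh using translate_int(1)[OF IH1, of h] by simp
  have v2: "integral\<^sup>L lborel (\<lambda>x. fd M h g (x - h) * cis (inner Z x)) = - integral\<^sup>L lborel ?H"
    unfolding sh using translate_int(2)[OF IH1, of h] by simp
  have eq: "(\<lambda>x. fd (Suc M) h g x * cis (inner Z x)) = (\<lambda>x. ?H x - fd M h g (x - h) * cis (inner Z x))"
    by (simp add: algebra_simps)
  show ?case unfolding eq using IH1 i2 v2 Suc by (simp add: Bochner_Integration.integral_diff)
qed



lemma pow2powr: "(2 powr a) ^ n = 2 powr (a * real n)"
  by (simp add: powr_realpow[symmetric] powr_powr)

lemma powr_window:
  fixes y r :: real
  assumes "2^n \<le> 2*y" "y \<le> 4 * 2^n"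
  shows "y powr r \<le> 4 powr \<bar>r\<bar> * (2 powr r)^n"
proof -
  define u where "u = y / 2^n"
  have pn: "(0::real) < 2^n" by simp
  have y: "y = 2^n * u" using pn by (simp add: u_def)
  have u1: "1/2 \<le> u" "u \<le> 4" using assms pn by (auto simp: u_def field_simps)
  have "y powr r = (2^n) powr r * u powr r" unfolding y by (rule powr_mult)
  also have "(2^n :: real) powr r = (2 powr r)^n"
    by (simp add: pow2powr powr_realpow[symmetric] powr_powr mult.commute)
  also have "u powr r \<le> 4 powr \<bar>r\<bar>"
  proof (cases "r \<ge> 0")
    case True then show ?thesis using u1 powr_mono2[of r u 4] by simp
  next
    case False
    have "u powr r \<le> (1/2) powr r" using u1 False by (intro powr_mono2') auto
    also have "(1/2::real) powr r = 2 powr (-r)" by (simp add: powr_divide powr_minus_divide)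
    also have "\<dots> \<le> 4 powr (-r)" using False by (intro powr_mono2) auto
    finally show ?thesis using False by simp
  qed
  then have "(2 powr r)^n * u powr r \<le> (2 powr r)^n * 4 powr \<bar>r\<bar>" by (intro mult_left_mono) auto
  finally show ?thesis by (simp add: mult.commute)
qed

lemma pow_decay:
  assumes "\<rho> \<le> 1" "0 \<le> \<rho>"
  shows "(1 / 2^n :: real)^k \<le> (2 powr (- \<rho> * real k))^n"
proof -
  have "(1 / 2^n :: real)^k = 1 / 2^(n*k)" by (simp add: power_mult power_one_over)
  also have "\<dots> = 2 powr (- (real n * real k))"
    by (simp add: powr_minus_divide powr_realpow[symmetric])
  also have "\<dots> \<le> 2 powr (- \<rho> * real k * real n)"
  proof (intro powr_mono)
    have "\<rho> * (real k * real n) \<le> 1 * (real k * real n)" using assms by (intro mult_right_mono) auto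
    then show "- (real n * real k) \<le> - \<rho> * real k * real n" by (simp add: algebra_simps)
  qed simp
  also have "\<dots> = (2 powr (- \<rho> * real k))^n" by (simp add: pow2powr)
  finally show ?thesis .
qed

lemma pointwise:
  fixes A F :: "nat \<Rightarrow> real \<Rightarrow> complex" and q :: "real \<Rightarrow> 'a::real_normed_vector"
  assumes Ab: "\<And>j s. norm (A j s) \<le> CA j * jbr (q s) powr (m - \<rho> * real j)"
    and Fb: "\<And>j s. norm (F j s) \<le> 2 * 2^j * K j * (1/2^n)^j"
    and Fnz: "\<And>j s. F j s \<noteq> 0 \<Longrightarrow> 2^n \<le> 2 * jbr (q s) \<and> norm (q s) \<le> 2^(Suc n)"
    and rho: "0 < \<rho>" "\<rho> \<le> 1" and K0: "\<And>j. K j \<ge> 0" and CA0: "\<And>j. CA j \<ge> 0"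
  shows "norm (\<Sum>j\<le>M. of_nat (M choose j) * A j s * F (M - j) s) \<le>
     (if norm (q s) \<le> 2^(Suc n) then (\<Sum>j\<le>M. real (M choose j) * CA j * 4 powr \<bar>m - \<rho> * real j\<bar> * (2 * 2^(M-j) * K (M-j))) * (2 powr (m - \<rho> * real M))^n else 0)"
proof (cases "norm (q s) \<le> 2^(Suc n)")
  case False
  then have "F j s = 0" for j using Fnz[of j s] by auto
  then show ?thesis using False by simp
next
  case True
  let ?w = "(2 powr (m - \<rho> * real M))^n"
  have trm: "norm (of_nat (M choose j) * A j s * F (M - j) s) \<le>
      real (M choose j) * CA j * 4 powr \<bar>m - \<rho> * real j\<bar> * (2 * 2^(M-j) * K (M-j)) * ?w" if j: "j \<le> M" for j
  proof (cases "F (M - j) s = 0")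
    case True then show ?thesis using K0 CA0 by (simp add: mult_nonneg_nonneg)
  next
    case False
    then have w1: "2^n \<le> 2 * jbr (q s)" and w2: "norm (q s) \<le> 2^(Suc n)" using Fnz by blast+
    have "jbr (q s) \<le> 1 + norm (q s)" by (rule jbr_le)
    also have "\<dots> \<le> 4 * 2^n"
    proof -
      have "norm (q s) \<le> 2 * 2^n" using w2 by simp
      then show ?thesis using one_le_power[of "2::real" n] by linarith
    qed
    finally have w3: "jbr (q s) \<le> 4 * 2^n" .
    let ?r = "m - \<rho> * real j"
    have a: "norm (A j s) \<le> CA j * (4 powr \<bar>?r\<bar> * (2 powr ?r)^n)"
      using Ab[of j s] mult_left_mono[OF powr_window[OF w1 w3, of ?r] CA0[of j]] by (rule order_trans)
    have f: "norm (F (M - j) s) \<le> 2 * 2^(M-j) * K (M-j) * (2 powr (- \<rho> * real (M - j)))^n"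
    proof -
      have k: "0 \<le> 2 * 2^(M-j) * K (M-j)" using K0[of "M-j"] by simp
      have "2 * 2^(M-j) * K (M-j) * (1 / 2^n)^(M-j) \<le> 2 * 2^(M-j) * K (M-j) * (2 powr (- \<rho> * real (M - j)))^n"
        using mult_left_mono[OF pow_decay[of \<rho> n "M - j"] k] rho by simp
      then show ?thesis using Fb[of "M - j" s] by (rule order_trans[rotated])
    qed
    have comb: "(2 powr ?r)^n * (2 powr (- \<rho> * real (M - j)))^n = ?w"
      using j by (simp add: power_mult_distrib[symmetric] powr_add[symmetric] of_nat_diff algebra_simps)
    have "norm (of_nat (M choose j) * A j s * F (M - j) s) = real (M choose j) * norm (A j s) * norm (F (M - j) s)"
      by (simp add: norm_mult)
    also have "\<dots> \<le> real (M choose j) * (CA j * (4 powr \<bar>?r\<bar> * (2 powr ?r)^n)) * (2 * 2^(M-j) * K (M-j) * (2 powr (- \<rho> * real (M - j)))^n)"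
      using a f by (intro mult_mono mult_left_mono) (auto simp: CA0 K0)
    also have "\<dots> = real (M choose j) * CA j * 4 powr \<bar>?r\<bar> * (2 * 2^(M-j) * K (M-j)) * ((2 powr ?r)^n * (2 powr (- \<rho> * real (M - j)))^n)"
      by (simp add: algebra_simps)
    finally show ?thesis unfolding comb .
  qed
  have "norm (\<Sum>j\<le>M. of_nat (M choose j) * A j s * F (M - j) s) \<le> (\<Sum>j\<le>M. norm (of_nat (M choose j) * A j s * F (M - j) s))"
    by (rule norm_sum)
  also have "\<dots> \<le> (\<Sum>j\<le>M. real (M choose j) * CA j * 4 powr \<bar>m - \<rho> * real j\<bar> * (2 * 2^(M-j) * K (M-j)) * ?w)"
    by (rule sum_mono) (use trm in auto)
  also have "\<dots> = (\<Sum>j\<le>M. real (M choose j) * CA j * 4 powr \<bar>m - \<rho> * real j\<bar> * (2 * 2^(M-j) * K (M-j))) * ?w"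
    by (simp add: sum_distrib_right)
  finally show ?thesis using True by simp
qed



lemma jbr_cont: "continuous_on UNIV (jbr :: 'a::real_normed_vector \<Rightarrow> real)"
  unfolding jbr_def[abs_def] by (intro continuous_intros)

lemma good_set:
  fixes a :: "'x::euclidean_space \<Rightarrow> 'a::euclidean_space \<Rightarrow> complex"
  assumes sm: "\<And>x. smooth_fun (a x)"
    and Cf: "\<And>es. set es \<subseteq> Basis \<Longrightarrow> (\<forall>\<Xi>. AE x in lborel. norm (iter_pdiff es (a x) \<Xi>) \<le> Cf es * jbr \<Xi> powr (m - \<rho> * real (length es)))"
  shows "AE x in lborel. \<forall>j. \<forall>e\<in>Basis. \<forall>\<Xi>. norm (iter_pdiff (replicate j e) (a x) \<Xi>) \<le> Cf (replicate j e) * jbr \<Xi> powr (m - \<rho> * real j)"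
proof -
  obtain D :: "'a set" where D: "countable D" "\<And>U. open U \<Longrightarrow> U \<noteq> {} \<Longrightarrow> \<exists>y\<in>D. y \<in> U"
    using countable_dense_exists by blast
  have cB: "countable (Basis :: 'a set)" by (simp add: countable_finite)
  have "AE x in lborel. \<forall>j. \<forall>e\<in>Basis. \<forall>\<Xi>\<in>D. norm (iter_pdiff (replicate j e) (a x) \<Xi>) \<le> Cf (replicate j e) * jbr \<Xi> powr (m - \<rho> * real j)"
  proof (subst AE_all_countable, intro allI)
    fix j
    show "AE x in lborel. \<forall>e\<in>Basis. \<forall>\<Xi>\<in>D. norm (iter_pdiff (replicate j e) (a x) \<Xi>) \<le> Cf (replicate j e) * jbr \<Xi> powr (m - \<rho> * real j)"
    proof (subst AE_ball_countable[OF cB], intro ballI)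
      fix e :: 'a assume e: "e \<in> Basis"
      show "AE x in lborel. \<forall>\<Xi>\<in>D. norm (iter_pdiff (replicate j e) (a x) \<Xi>) \<le> Cf (replicate j e) * jbr \<Xi> powr (m - \<rho> * real j)"
      proof (subst AE_ball_countable[OF D(1)], intro ballI)
        fix \<Xi> assume "\<Xi> \<in> D"
        have "set (replicate j e) \<subseteq> Basis" using e by auto
        from Cf[OF this] show "AE x in lborel. norm (iter_pdiff (replicate j e) (a x) \<Xi>) \<le> Cf (replicate j e) * jbr \<Xi> powr (m - \<rho> * real j)"
          by simp
      qed
    qed
  qed
  then show ?thesis
  proof (rule eventually_mono)
    fix x
    assume H: "\<forall>j. \<forall>e\<in>Basis. \<forall>\<Xi>\<in>D. norm (iter_pdiff (replicate j e) (a x) \<Xi>) \<le> Cf (replicate j e) * jbr \<Xi> powr (m - \<rho> * real j)"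
    show "\<forall>j. \<forall>e\<in>Basis. \<forall>\<Xi>. norm (iter_pdiff (replicate j e) (a x) \<Xi>) \<le> Cf (replicate j e) * jbr \<Xi> powr (m - \<rho> * real j)"
    proof (intro allI ballI)
    fix j and e :: 'a and \<Xi> :: 'a
    assume e: "e \<in> Basis"
    let ?f = "iter_pdiff (replicate j e) (a x)"
    let ?T = "{\<Xi>. norm (?f \<Xi>) \<le> Cf (replicate j e) * jbr \<Xi> powr (m - \<rho> * real j)}"
    have "closed ?T"
    proof (rule closed_Collect_le)
      show "continuous_on UNIV (\<lambda>\<Xi>. norm (?f \<Xi>))"
        by (intro continuous_on_norm smooth_rep_cont[OF sm e])
      have "continuous_on UNIV (\<lambda>\<Xi>. jbr \<Xi> powr (m - \<rho> * real j))"
        by (rule continuous_on_powr[OF jbr_cont continuous_on_const]) (use jbr_pos in \<open>metis less_irrefl\<close>)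
      then show "continuous_on UNIV (\<lambda>\<Xi>. Cf (replicate j e) * jbr \<Xi> powr (m - \<rho> * real j))"
        by (rule continuous_on_mult[OF continuous_on_const])
    qed
    show "norm (?f \<Xi>) \<le> Cf (replicate j e) * jbr \<Xi> powr (m - \<rho> * real j)"
    proof (rule ccontr)
      assume "\<not> ?thesis"
      then have "\<Xi> \<in> - ?T" by simp
      moreover have "open (- ?T)" using \<open>closed ?T\<close> by (simp add: open_Compl)
      ultimately obtain y where "y \<in> D" "y \<in> - ?T" using D(2)[of "- ?T"] by blast
      then show False using H e by auto
    qed
    qed
  qed
qed



lemma ind_integrable: "integrable lborel (\<lambda>x::'a::euclidean_space. c * indicator (cball 0 R) x :: real)"
proof -
  have "emeasure lborel (cball (0::'a) R) < \<infinity>" by (rule emeasure_bounded_finite) simp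
  then have "integrable lborel (indicator (cball (0::'a) R) :: 'a \<Rightarrow> real)"
    by (intro integrable_real_indicator) auto
  then show ?thesis by simp
qed

lemma ind_integral: "integral\<^sup>L lborel (\<lambda>x::'a::euclidean_space. c * indicator (cball 0 R) x :: real) = c * measure lborel (cball (0::'a) R)"
  by simp

lemma term_bound:
  fixes g :: "'a::euclidean_space \<Rightarrow> complex" and P :: "'a \<Rightarrow> nat \<Rightarrow> real \<Rightarrow> complex"
  assumes gc: "continuous_on UNIV g"
    and e1: "norm e = 1" and hpi: "inner Z (t *\<^sub>R e) = pi"
    and P0: "\<And>p s. P p 0 s = g (p + s *\<^sub>R e)"
    and Pd: "\<And>p i s. (P p i has_vector_derivative P p (Suc i) s) (at s)"
    and Pb: "\<And>p i s. norm (P p i s) \<le> (if norm (p + s *\<^sub>R e) \<le> R0 then Bc i else 0)"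
    and Bc0: "\<And>i. Bc i \<ge> 0"
  shows "norm (integral\<^sup>L lborel (\<lambda>x. g x * cis (inner Z x))) \<le> (\<bar>t\<bar>/2)^M * Bc M * measure lborel (cball (0::'a) (R0 + real M * \<bar>t\<bar>))"
proof -
  let ?h = "t *\<^sub>R e"
  have "(\<lambda>x. g x * cis (inner Z x)) \<in> borel_measurable borel"
    by (rule borel_measurable_continuous_onI) (intro continuous_intros gc)
  then have meas: "(\<lambda>x. g x * cis (inner Z x)) \<in> borel_measurable lborel" by simp
  have gb: "norm (g x * cis (inner Z x)) \<le> norm (Bc 0 * indicator (cball 0 R0) x)" for x
  proof -
    have "norm (g x) \<le> (if norm x \<le> R0 then Bc 0 else 0)" using Pb[of x 0 0] P0[of x 0] by simp
    then show ?thesis using Bc0[of 0] by (auto simp: norm_mult indicator_def)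
  qed
  have int: "integrable lborel (\<lambda>x. g x * cis (inner Z x))"
    by (rule Bochner_Integration.integrable_bound[OF ind_integrable meas]) (use gb in auto)
  note FI = fd_integral[OF int hpi, of M]
  let ?R = "R0 + real M * \<bar>t\<bar>"
  have fdb: "norm (fd M ?h g p * cis (inner Z p)) \<le> \<bar>t\<bar>^M * Bc M * indicator (cball 0 ?R) p" for p
  proof -
    have "fd M ?h g p = fd M ?h g (p + 0 *\<^sub>R e)" by simp
    also have "\<dots> = fd M t (\<lambda>s. g (p + s *\<^sub>R e)) 0" by (rule fd_line)
    also have "(\<lambda>s. g (p + s *\<^sub>R e)) = P p 0" using P0 by auto
    finally have eq: "fd M ?h g p = fd M t (P p 0) 0" .
    let ?Bnd = "(if norm p \<le> ?R then Bc M else 0)"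
    have "norm (fd M t (P p 0) 0) \<le> \<bar>t\<bar>^M * ?Bnd"
    proof (rule fd_bound[where D = "P p"])
      show "(P p i has_vector_derivative P p (Suc i) s) (at s)" for i s by (rule Pd)
      show "\<forall>\<sigma>\<in>{0..real M}. norm (P p (0 + M) (0 - \<sigma> * t)) \<le> ?Bnd"
      proof
        fix \<sigma> assume \<sigma>: "\<sigma> \<in> {0..real M}"
        show "norm (P p (0 + M) (0 - \<sigma> * t)) \<le> ?Bnd"
        proof (cases "norm p \<le> ?R")
          case True then show ?thesis using Pb[of p M "0 - \<sigma> * t"] Bc0[of M]
            by (smt (verit) add_0)
        next
          case False
          have "norm ((0 - \<sigma> * t) *\<^sub>R e) = \<sigma> * \<bar>t\<bar>" using e1 \<sigma> by (simp add: abs_mult)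
          also have "\<dots> \<le> real M * \<bar>t\<bar>" using \<sigma> by (intro mult_right_mono) auto
          finally have "norm ((0 - \<sigma> * t) *\<^sub>R e) \<le> real M * \<bar>t\<bar>" .
          moreover have "norm p - norm ((0 - \<sigma> * t) *\<^sub>R e) \<le> norm (p + (0 - \<sigma> * t) *\<^sub>R e)"
            by (metis norm_diff_ineq norm_minus_cancel diff_minus_eq_add)
          ultimately have "\<not> norm (p + (0 - \<sigma> * t) *\<^sub>R e) \<le> R0" using False by linarith
          then show ?thesis using Pb[of p M "0 - \<sigma> * t"] False by simp
        qed
      qed
    qed
    then show ?thesis unfolding eq by (auto simp: norm_mult indicator_def)
  qed
  have "norm (2^M * integral\<^sup>L lborel (\<lambda>x. g x * cis (inner Z x))) = norm (integral\<^sup>L lborel (\<lambda>x. fd M ?h g x * cis (inner Z x)))"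
    using FI by simp
  also have "\<dots> \<le> integral\<^sup>L lborel (\<lambda>x::'a. \<bar>t\<bar>^M * Bc M * indicator (cball 0 ?R) x)"
  proof -
    have "norm (integral\<^sup>L lborel (\<lambda>x. fd M ?h g x * cis (inner Z x))) \<le> integral\<^sup>L lborel (\<lambda>x. norm (fd M ?h g x * cis (inner Z x)))"
      by (rule integral_norm_bound)
    also have "\<dots> \<le> integral\<^sup>L lborel (\<lambda>x::'a. \<bar>t\<bar>^M * Bc M * indicator (cball 0 ?R) x)"
      by (rule Bochner_Integration.integral_mono) (use FI ind_integrable fdb in auto)
    finally show ?thesis .
  qed
  also have "\<dots> = \<bar>t\<bar>^M * Bc M * measure lborel (cball (0::'a) ?R)" by (rule ind_integral)
  finally have "2^M * norm (integral\<^sup>L lborel (\<lambda>x. g x * cis (inner Z x))) \<le> \<bar>t\<bar>^M * Bc M * measure lborel (cball (0::'a) ?R)"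
    by (simp add: norm_mult norm_power)
  then show ?thesis by (simp add: power_divide field_simps)
qed



context psi_loc begin

lemma In_bound:
  fixes f :: "'a \<Rightarrow> complex" and \<phi> :: "nat \<Rightarrow> 'a \<Rightarrow> real"
  assumes smf: "smooth_fun f"
    and \<phi>0: "\<phi> 0 = \<psi>" and \<phi>S: "\<And>k v. \<phi> (Suc k) v = \<psi> ((1 / 2 ^ Suc k) *\<^sub>R v) - \<psi> ((1 / 2 ^ k) *\<^sub>R v)"
    and K: "\<And>j v. \<bar>Psi j v\<bar> \<le> K j" and K0: "\<And>j. K j \<ge> 0" and CA0: "\<And>j. CA j \<ge> 0"
    and Ab: "\<And>j \<Xi>. norm (iter_pdiff (replicate j e) f \<Xi>) \<le> CA j * jbr \<Xi> powr (m - \<rho> * real j)"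
    and rho: "0 < \<rho>" "\<rho> \<le> 1"
    and hpi: "inner Z (t *\<^sub>R e) = pi"
  shows "norm (integral\<^sup>L lborel (\<lambda>\<Xi>. f \<Xi> * of_real (\<phi> n \<Xi>) * cis (inner Z \<Xi>))) \<le>
    (\<bar>t\<bar>/2)^M * ((\<Sum>j\<le>M. real (M choose j) * CA j * 4 powr \<bar>m - \<rho> * real j\<bar> * (2 * 2^(M-j) * K (M-j))) * (2 powr (m - \<rho> * real M))^n)
      * measure lborel (cball (0::'a) (2^Suc n + real M * \<bar>t\<bar>))"
proof -
  define Bs where "Bs i = (\<Sum>j\<le>i. real (i choose j) * CA j * 4 powr \<bar>m - \<rho> * real j\<bar> * (2 * 2^(i-j) * K (i-j))) * (2 powr (m - \<rho> * real i))^n" for i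
  let ?prop = "\<lambda>p \<Phi>. (\<forall>s. \<Phi> 0 s = complex_of_real (\<phi> n (p + s *\<^sub>R e)))
     \<and> (\<forall>i s. (\<Phi> i has_vector_derivative \<Phi> (Suc i) s) (at s))
     \<and> (\<forall>j s. norm (\<Phi> j s) \<le> 2 * 2^j * K j * (1 / 2^n)^j)
     \<and> (\<forall>j s. \<Phi> j s \<noteq> 0 \<longrightarrow> 2^n \<le> 2 * jbr (p + s *\<^sub>R e) \<and> norm (p + s *\<^sub>R e) \<le> 2^(Suc n))"
  define \<Phi> where "\<Phi> p = (SOME \<Phi>. ?prop p \<Phi>)" for p
  have \<Phi>p: "?prop p (\<Phi> p)" for p
  proof -
    have ex: "\<exists>\<Phi>. ?prop p \<Phi>" using phi_family[OF \<phi>0 \<phi>S K, of n p] by simp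
    show ?thesis unfolding \<Phi>_def by (rule someI_ex[OF ex])
  qed
  define A where "A p j s = iter_pdiff (replicate j e) f (p + s *\<^sub>R e)" for p j s
  define P where "P p i s = (\<Sum>j\<le>i. of_nat (i choose j) * A p j s * \<Phi> p (i - j) s)" for p i s
  define g where "g \<Xi> = f \<Xi> * of_real (\<phi> n \<Xi>)" for \<Xi>
  have contf: "continuous_on UNIV f" using smooth_rep_cont[OF smf e, of 0] by simp
  have contpsi: "continuous_on UNIV \<psi>" using smooth_rep_cont[OF sm e, of 0] by simp
  have contphi: "continuous_on UNIV (\<phi> n)"
  proof (cases n)
    case 0 then show ?thesis using contpsi \<phi>0 by simp
  next
    case (Suc k)
    have "continuous_on UNIV (\<lambda>v. \<psi> ((1 / 2 ^ Suc k) *\<^sub>R v) - \<psi> ((1 / 2 ^ k) *\<^sub>R v))"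
      by (intro continuous_on_diff continuous_on_compose2[OF contpsi] continuous_intros) auto
    then show ?thesis using Suc \<phi>S by (simp add: fun_eq_iff[symmetric])
  qed
  have gc: "continuous_on UNIV g" unfolding g_def[abs_def]
    by (intro continuous_intros contf continuous_on_compose2[OF continuous_on_of_real contphi]) auto
  have "norm (integral\<^sup>L lborel (\<lambda>x. g x * cis (inner Z x))) \<le> (\<bar>t\<bar>/2)^M * Bs M * measure lborel (cball (0::'a) (2^Suc n + real M * \<bar>t\<bar>))"
  proof (rule term_bound[where P = P])
    show "continuous_on UNIV g" by (rule gc)
    show "norm e = 1" using e by simp
    show "inner Z (t *\<^sub>R e) = pi" by (rule hpi)
    show "P p 0 s = g (p + s *\<^sub>R e)" for p s
      using \<Phi>p[of p] by (simp add: P_def A_def g_def)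
    show "(P p i has_vector_derivative P p (Suc i) s) (at s)" for p i s
      unfolding P_def
    proof (rule leibniz_family)
      show "(A p i has_vector_derivative A p (Suc i) s) (at s)" for i s
        unfolding A_def by (rule smooth_rep_chain[OF smf e])
      show "(\<Phi> p i has_vector_derivative \<Phi> p (Suc i) s) (at s)" for i s
        using \<Phi>p[of p] by blast
    qed
    show "norm (P p i s) \<le> (if norm (p + s *\<^sub>R e) \<le> 2^Suc n then Bs i else 0)" for p i s
      unfolding P_def Bs_def
    proof (rule pointwise[where q = "\<lambda>s. p + s *\<^sub>R e"])
      show "norm (A p j s) \<le> CA j * jbr (p + s *\<^sub>R e) powr (m - \<rho> * real j)" for j s
        unfolding A_def by (rule Ab)
      show "norm (\<Phi> p j s) \<le> 2 * 2^j * K j * (1 / 2^n)^j" for j s using \<Phi>p[of p] by blast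
      show "\<Phi> p j s \<noteq> 0 \<Longrightarrow> 2^n \<le> 2 * jbr (p + s *\<^sub>R e) \<and> norm (p + s *\<^sub>R e) \<le> 2^(Suc n)" for j s
        using \<Phi>p[of p] by blast
    qed (use rho K0 CA0 in auto)
    show "Bs i \<ge> 0" for i unfolding Bs_def using K0 CA0
      by (intro mult_nonneg_nonneg sum_nonneg) auto
  qed
  then show ?thesis by (simp add: g_def Bs_def)
qed

end



lemma prod_bound:
  fixes nz :: real and z N :: "'j \<Rightarrow> real"
  assumes "1 \<le> nz" "\<And>j. j \<in> S \<Longrightarrow> 1 \<le> z j \<and> z j \<le> nz" "\<And>j. j \<in> S \<Longrightarrow> N j \<ge> 0"
    "(\<Sum>j\<in>S. N j) \<le> real M"
  shows "nz powr (- real M) \<le> (\<Prod>j\<in>S. z j powr (- N j))"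
proof -
  have "nz powr (- real M) \<le> nz powr (- (\<Sum>j\<in>S. N j))"
    using assms(1,4) by (intro powr_mono) auto
  also have "\<dots> = nz powr (\<Sum>j\<in>S. - N j)" by (simp add: sum_negf)
  also have "\<dots> = (\<Prod>j\<in>S. nz powr (- N j))" using assms(1) by (intro powr_sum) auto
  also have "\<dots> \<le> (\<Prod>j\<in>S. z j powr (- N j))"
  proof (rule prod_mono)
    fix j assume j: "j \<in> S"
    show "0 \<le> nz powr - N j \<and> nz powr - N j \<le> z j powr - N j"
      using assms(2,3)[OF j] by (auto intro: powr_mono2')
  qed
  finally show ?thesis .
qed

lemma exists_max_basis:
  fixes Z :: "'a::euclidean_space"
  obtains e where "e \<in> Basis" "\<And>b. b \<in> Basis \<Longrightarrow> \<bar>inner Z b\<bar> \<le> \<bar>inner Z e\<bar>"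
proof -
  let ?mx = "Max ((\<lambda>b. \<bar>inner Z b\<bar>) ` Basis)"
  have "?mx \<in> (\<lambda>b. \<bar>inner Z b\<bar>) ` Basis" by (rule Max_in) auto
  then obtain e where e: "e \<in> Basis" "\<bar>inner Z e\<bar> = ?mx" by (auto simp del: Max_in)
  have "\<bar>inner Z b\<bar> \<le> \<bar>inner Z e\<bar>" if "b \<in> Basis" for b
    unfolding e(2) by (rule Max_ge) (use that in auto)
  then show ?thesis using that e(1) by blast
qed

lemma inner_max_ge:
  fixes Z e :: "'a::euclidean_space"
  assumes "e \<in> Basis" "\<And>b. b \<in> Basis \<Longrightarrow> \<bar>inner Z b\<bar> \<le> \<bar>inner Z e\<bar>"
  shows "norm Z \<le> real DIM('a) * \<bar>inner Z e\<bar>"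
proof -
  have "norm Z \<le> (\<Sum>b\<in>Basis. \<bar>inner Z b\<bar>)" by (rule norm_le_l1)
  also have "\<dots> \<le> of_nat (card (Basis::'a set)) * \<bar>inner Z e\<bar>"
    by (rule sum_bounded_above) (use assms in auto)
  finally show ?thesis by simp
qed



theorem lemma3p1:
  fixes m \<rho> :: real
    and a :: "real^'n \<Rightarrow> real^'n^'N \<Rightarrow> complex"
    and \<phi> :: "nat \<Rightarrow> real^'n^'N \<Rightarrow> real"
    and S :: "'N set"
    and Nj :: "'N \<Rightarrow> real"
  assumes "0 < \<rho>" and "\<rho> \<le> 1"
    and "LinfS m \<rho> a"
    and "lp_partition \<phi>"
    and "S \<noteq> {}"
    and "\<forall>j\<in>S. Nj j \<ge> 0"
  shows "\<exists>C. AE x in lborel. \<forall>Z::real^'n^'N. {j. norm (Z $ j) \<ge> 1} = S \<longrightarrow>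
           norm (osc_int \<phi> (a x) Z) \<le> C * (\<Prod>j\<in>S. norm (Z $ j) powr (- Nj j))"
proof -
  note rho = assms(1,2)
  define D where "D = DIM(real^'n^'N)"
  have sm: "\<And>x. smooth_fun (a x)" using assms(3) unfolding LinfS_def by blast
  have "\<forall>es. \<exists>C. set es \<subseteq> Basis \<longrightarrow> (\<forall>\<Xi>. AE x in lborel. norm (iter_pdiff es (a x) \<Xi>) \<le> C * jbr \<Xi> powr (m - \<rho> * real (length es)))"
    using assms(3) unfolding LinfS_def by blast
  then obtain Cf where Cf: "\<And>es. set es \<subseteq> Basis \<Longrightarrow> (\<forall>\<Xi>. AE x in lborel. norm (iter_pdiff es (a x) \<Xi>) \<le> Cf es * jbr \<Xi> powr (m - \<rho> * real (length es)))"
    by metis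
  note good = good_set[OF sm Cf]
  obtain \<psi> :: "real^'n^'N \<Rightarrow> real" where \<psi>: "smooth_fun \<psi>" "\<And>v. 0 \<le> \<psi> v \<and> \<psi> v \<le> 1"
      "\<And>v. norm v \<le> 1 \<Longrightarrow> \<psi> v = 1" "\<And>v. norm v \<ge> 2 \<Longrightarrow> \<psi> v = 0" "\<phi> 0 = \<psi>"
      "\<And>k v. \<phi> (Suc k) v = \<psi> ((1 / 2 ^ Suc k) *\<^sub>R v) - \<psi> ((1 / 2 ^ k) *\<^sub>R v)"
    using assms(4) unfolding lp_partition_def by metis
  have psiloc: "psi_loc \<psi> e" if "e \<in> Basis" for e
    using \<psi>(1-4) that unfolding psi_loc_def by blast
  have "\<forall>e. \<exists>Kf. \<forall>j. e \<in> Basis \<longrightarrow> Kf j \<ge> 0 \<and> (\<forall>v. \<bar>iter_pdiff (replicate j e) \<psi> v\<bar> \<le> Kf j)"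
  proof
    fix e :: "real^'n^'N"
    show "\<exists>Kf. \<forall>j. e \<in> Basis \<longrightarrow> Kf j \<ge> 0 \<and> (\<forall>v. \<bar>iter_pdiff (replicate j e) \<psi> v\<bar> \<le> Kf j)"
    proof (cases "e \<in> Basis")
      case True
      have "\<forall>j. \<exists>k. k \<ge> 0 \<and> (\<forall>v. \<bar>iter_pdiff (replicate j e) \<psi> v\<bar> \<le> k)"
        using psi_loc.Psi_bounded[OF psiloc[OF True]] by blast
      then show ?thesis by metis
    qed auto
  qed
  then obtain K where K: "\<And>e j. e \<in> Basis \<Longrightarrow> K e j \<ge> 0 \<and> (\<forall>v. \<bar>iter_pdiff (replicate j e) \<psi> v\<bar> \<le> K e j)"
    by metis
  obtain M :: nat where M: "max (\<Sum>j\<in>S. Nj j) ((m + real D) / \<rho>) < real M"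
    using reals_Archimedean2 by blast
  have MN: "(\<Sum>j\<in>S. Nj j) \<le> real M" using M by linarith
  have Mr: "m - \<rho> * real M + real D < 0"
  proof -
    have "(m + real D) / \<rho> < real M" using M by linarith
    then have "m + real D < real M * \<rho>" using rho by (simp add: divide_less_eq)
    then show ?thesis by (simp add: algebra_simps)
  qed
  define CA where "CA e j = max 0 (Cf (replicate j e))" for e j
  define Bsum where "Bsum e = (\<Sum>j\<le>M. real (M choose j) * CA e j * 4 powr \<bar>m - \<rho> * real j\<bar> * (2 * 2^(M-j) * K e (M-j)))" for e
  define V where "V = unit_ball_vol (real D)"
  define Ch where "Ch e = (pi * real D / 2)^M * Bsum e * V * (2 + real M * pi * real D)^D" for e
  define q where "q = 2 powr (m - \<rho> * real M) * 2^D"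
  define Cfin where "Cfin = (\<Sum>b\<in>Basis. Ch b) / (1 - q)"
  have q_eq: "q = 2 powr (m - \<rho> * real M + real D)"
    unfolding q_def by (simp add: powr_add powr_realpow)
  have q1: "q < 1" unfolding q_eq by (rule powr_less_one) (use Mr in auto)
  have q0: "0 \<le> q" unfolding q_def by simp
  have CA0: "CA e j \<ge> 0" for e j unfolding CA_def by simp
  have Bsum0: "Bsum e \<ge> 0" if "e \<in> Basis" for e unfolding Bsum_def
    using CA0 K[OF that] by (intro sum_nonneg) (auto intro!: mult_nonneg_nonneg)
  have V0: "V \<ge> 0" unfolding V_def by simp
  have Ch0: "Ch e \<ge> 0" if "e \<in> Basis" for e unfolding Ch_def
    using Bsum0[OF that] V0 by (intro mult_nonneg_nonneg) auto
  have Dpos: "0 < real D" unfolding D_def by simp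
  have measc: "measure lborel (cball (0::real^'n^'N) R) = V * R^D" if "R \<ge> 0" for R
    using content_cball[OF that, of "0::real^'n^'N"] by (simp add: V_def D_def)
  have "AE x in lborel. \<forall>Z::real^'n^'N. {j. norm (Z $ j) \<ge> 1} = S \<longrightarrow>
           norm (osc_int \<phi> (a x) Z) \<le> Cfin * (\<Prod>j\<in>S. norm (Z $ j) powr (- Nj j))"
    using good
  proof (rule eventually_mono)
    fix x
    assume gx: "\<forall>j. \<forall>e\<in>Basis. \<forall>\<Xi>. norm (iter_pdiff (replicate j e) (a x) \<Xi>) \<le> Cf (replicate j e) * jbr \<Xi> powr (m - \<rho> * real j)"
    show "\<forall>Z::real^'n^'N. {j. norm (Z $ j) \<ge> 1} = S \<longrightarrow>
           norm (osc_int \<phi> (a x) Z) \<le> Cfin * (\<Prod>j\<in>S. norm (Z $ j) powr (- Nj j))"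
    proof (intro allI impI)
    fix Z :: "real^'n^'N"
    assume ZS: "{j. norm (Z $ j) \<ge> 1} = S"
    obtain j0 where "j0 \<in> S" using assms(5) by blast
    then have nZ: "1 \<le> norm Z" using ZS Finite_Cartesian_Product.norm_nth_le[of Z j0] by auto
    have nzp: "0 < norm Z" using nZ by linarith
    obtain e where e: "e \<in> Basis" "\<And>b. b \<in> Basis \<Longrightarrow> \<bar>inner Z b\<bar> \<le> \<bar>inner Z e\<bar>"
      by (rule exists_max_basis[of Z]) blast
    have le: "norm Z \<le> real D * \<bar>inner Z e\<bar>" unfolding D_def by (rule inner_max_ge[OF e])
    have ze: "0 < \<bar>inner Z e\<bar>"
    proof (rule ccontr)
      assume "\<not> ?thesis"
      then have "\<bar>inner Z e\<bar> = 0" by simp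
      then show False using le nZ by simp
    qed
    define t where "t = pi / inner Z e"
    have hpi: "inner Z (t *\<^sub>R e) = pi" using ze by (simp add: t_def)
    have tabs: "\<bar>t\<bar> = pi / \<bar>inner Z e\<bar>" by (simp add: t_def)
    have tb: "\<bar>t\<bar> \<le> pi * real D / norm Z"
    proof -
      have nz0: "0 < norm Z" using nZ by linarith
      have "pi * norm Z \<le> pi * (real D * \<bar>inner Z e\<bar>)" by (rule mult_left_mono[OF le]) simp
      then have "pi * norm Z / (\<bar>inner Z e\<bar> * norm Z) \<le> pi * (real D * \<bar>inner Z e\<bar>) / (\<bar>inner Z e\<bar> * norm Z)"
        using ze nz0 by (intro divide_right_mono) auto
      then show ?thesis unfolding tabs using ze nz0 by (simp add: field_simps)
    qed
    have tb1: "\<bar>t\<bar> \<le> pi * real D"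
    proof -
      have "pi * real D / norm Z \<le> pi * real D / 1" using nZ Dpos by (intro divide_left_mono) auto
      then have "pi * real D / norm Z \<le> pi * real D" by simp
      then show ?thesis using tb by linarith
    qed
    have Ab: "norm (iter_pdiff (replicate j e) (a x) \<Xi>) \<le> CA e j * jbr \<Xi> powr (m - \<rho> * real j)" for j \<Xi>
    proof -
      have "norm (iter_pdiff (replicate j e) (a x) \<Xi>) \<le> Cf (replicate j e) * jbr \<Xi> powr (m - \<rho> * real j)"
        using gx e(1) by blast
      also have "\<dots> \<le> CA e j * jbr \<Xi> powr (m - \<rho> * real j)"
        unfolding CA_def by (intro mult_right_mono) auto
      finally show ?thesis .
    qed
    define I where "I n = integral\<^sup>L lborel (\<lambda>\<Xi>. a x \<Xi> * of_real (\<phi> n \<Xi>) * cis (inner Z \<Xi>))" for n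
    define Ce where "Ce = (\<bar>t\<bar>/2)^M * Bsum e * V * (2 + real M * \<bar>t\<bar>)^D"
    have In: "norm (I n) \<le> Ce * q^n" for n
    proof -
      let ?R = "2^Suc n + real M * \<bar>t\<bar>"
      have "norm (I n) \<le> (\<bar>t\<bar>/2)^M * (Bsum e * (2 powr (m - \<rho> * real M))^n) * measure lborel (cball (0::real^'n^'N) ?R)"
        unfolding I_def Bsum_def
        by (rule psi_loc.In_bound[OF psiloc[OF e(1)] sm \<psi>(5) \<psi>(6)]) (use K[OF e(1)] CA0 Ab rho hpi in auto)
      also have "measure lborel (cball (0::real^'n^'N) ?R) = V * ?R^D" by (rule measc) simp
      also have "?R^D \<le> (2^D)^n * (2 + real M * \<bar>t\<bar>)^D"
      proof -
        have "?R \<le> 2^n * (2 + real M * \<bar>t\<bar>)"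
        proof -
          have "1 * (real M * \<bar>t\<bar>) \<le> 2^n * (real M * \<bar>t\<bar>)"
            by (rule mult_right_mono[OF one_le_power]) auto
          then show ?thesis by (simp add: algebra_simps)
        qed
        then have "?R^D \<le> (2^n * (2 + real M * \<bar>t\<bar>))^D" by (intro power_mono) auto
        also have "\<dots> = (2^D)^n * (2 + real M * \<bar>t\<bar>)^D"
        proof -
          have "((2::real)^n)^D = (2^D)^n" by (metis power_mult mult.commute)
          then show ?thesis by (simp only: power_mult_distrib)
        qed
        finally show ?thesis .
      qed
      then have "(\<bar>t\<bar>/2)^M * (Bsum e * (2 powr (m - \<rho> * real M))^n) * (V * ?R^D) \<le>
          (\<bar>t\<bar>/2)^M * (Bsum e * (2 powr (m - \<rho> * real M))^n) * (V * ((2^D)^n * (2 + real M * \<bar>t\<bar>)^D))"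
        using Bsum0[OF e(1)] V0 by (intro mult_left_mono) auto
      also have "\<dots> = Ce * q^n"
        unfolding Ce_def q_def power_mult_distrib by (simp only: mult_ac)
      finally show ?thesis by simp
    qed
    have Ce_le: "Ce \<le> Ch e * norm Z powr (- real M)"
    proof -
      have a1: "(\<bar>t\<bar>/2)^M \<le> (pi * real D / 2)^M * norm Z powr (- real M)"
      proof -
        have "(\<bar>t\<bar>/2)^M \<le> (pi * real D / norm Z / 2)^M" using tb by (intro power_mono) auto
        also have "\<dots> = (pi * real D / 2)^M * norm Z powr (- real M)"
          using nzp by (simp add: powr_minus_divide powr_realpow power_divide)
        finally show ?thesis .
      qed
      have a2: "(2 + real M * \<bar>t\<bar>)^D \<le> (2 + real M * pi * real D)^D"
        using tb1 by (intro power_mono) (auto simp: mult.assoc intro: mult_left_mono)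
      have "Ce = (\<bar>t\<bar>/2)^M * (Bsum e * V) * (2 + real M * \<bar>t\<bar>)^D" by (simp add: Ce_def)
      also have "\<dots> \<le> ((pi * real D / 2)^M * norm Z powr (- real M)) * (Bsum e * V) * (2 + real M * pi * real D)^D"
        using a1 a2 Bsum0[OF e(1)] V0 by (intro mult_mono) auto
      also have "\<dots> = Ch e * norm Z powr (- real M)" by (simp add: Ch_def)
      finally show ?thesis .
    qed
    have geo: "summable (\<lambda>n. Ce * q^n)" using q0 q1 by (intro summable_mult summable_geometric) auto
    have sn: "summable (\<lambda>n. norm (I n))"
      by (rule summable_comparison_test[OF _ geo]) (use In in auto)
    have "norm (osc_int \<phi> (a x) Z) = norm (suminf I)" by (simp add: osc_int_def I_def[abs_def])
    also have "\<dots> \<le> (\<Sum>n. norm (I n))" by (rule summable_norm[OF sn])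
    also have "\<dots> \<le> (\<Sum>n. Ce * q^n)" by (rule suminf_le[OF In sn geo])
    also have "\<dots> = Ce / (1 - q)" using q0 q1 by (simp add: suminf_mult suminf_geometric summable_geometric)
    also have "\<dots> \<le> Ch e * norm Z powr (- real M) / (1 - q)" using Ce_le q1 by (simp add: divide_right_mono)
    also have "\<dots> \<le> (\<Sum>b\<in>Basis. Ch b) * norm Z powr (- real M) / (1 - q)"
      using q1 Ch0 e(1) by (intro divide_right_mono mult_right_mono member_le_sum) auto
    also have "\<dots> = Cfin * norm Z powr (- real M)" by (simp add: Cfin_def)
    also have "\<dots> \<le> Cfin * (\<Prod>j\<in>S. norm (Z $ j) powr (- Nj j))"
    proof (rule mult_left_mono)
      show "0 \<le> Cfin" unfolding Cfin_def using q1 Ch0 by (intro divide_nonneg_pos sum_nonneg) auto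
      show "norm Z powr (- real M) \<le> (\<Prod>j\<in>S. norm (Z $ j) powr (- Nj j))"
      proof (rule prod_bound[OF nZ _ _ MN])
        fix j assume "j \<in> S"
        then show "1 \<le> norm (Z $ j) \<and> norm (Z $ j) \<le> norm Z" using ZS Finite_Cartesian_Product.norm_nth_le[of Z j] by auto
        show "Nj j \<ge> 0" using assms(6) \<open>j \<in> S\<close> by blast
      qed
    qed
    finally show "norm (osc_int \<phi> (a x) Z) \<le> Cfin * (\<Prod>j\<in>S. norm (Z $ j) powr (- Nj j))" .
    qed
  qed
  then show ?thesis by blast
qed


end
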